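(* (i) Let $r\geq 3$, let $p_1,\dots,p_r$ be distinct odd primes, $n=p_1\cdots p_r$ and $D=\{p_1,\dots,p_r\}$. Then the circulant graph $G(n;S)$ with $S=\bigcup_{d\in D}G_n(d)$ has diameter $2$. (ii) Let $p_1,\dots,p_r$ be distinct odd primes, $m=p_1\cdots p_r$, $n=2m^2$ and $D=\{(m/p_1)^2,\dots,(m/p_r)^2\}$. Then the circulant graph $G(n;S)$ with $S=\bigcup_{d\in D}G_n(d)$ has diameter $2r+1$.
   Context: For a divisor $d$ of $n$, $G_n(d)=\{k : 1\le k\le n-1,\ \gcd(k,n)=d\}$. For a set $S\subseteq\{1,\dots,n-1\}$ with $s\in S$ iff $n-s\in S$, the circulant graph $G(n;S)$ is the undirected graph on vertex set $\mathbb{Z}_n$ in which $i$ and $j$ are adjacent iff $i-j \bmod n\in S$. The diameter is the maximum over vertex pairs of the shortest-path distance. *)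

theory Defs
  imports Main "HOL-Library.Extended_Nat" "HOL-Computational_Algebra.Primes"
begin

definition Gn :: "nat \<Rightarrow> nat \<Rightarrow> nat set" where
  "Gn n d = {k. 1 \<le> k \<and> k \<le> n - 1 \<and> gcd k n = d}"

definition circ_adj :: "nat \<Rightarrow> nat set \<Rightarrow> nat \<Rightarrow> nat \<Rightarrow> bool" where
  "circ_adj n S i j \<longleftrightarrow> i < n \<and> j < n \<and> nat ((int i - int j) mod int n) \<in> S"

definition circ_walk :: "nat \<Rightarrow> nat set \<Rightarrow> nat \<Rightarrow> nat \<Rightarrow> nat \<Rightarrow> bool" where
  "circ_walk n S k i j \<longleftrightarrow> (\<exists>f :: nat \<Rightarrow> nat. f 0 = i \<and> f k = j \<and>
      (\<forall>t<k. circ_adj n S (f t) (f (Suc t))))"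

definition circ_dist :: "nat \<Rightarrow> nat set \<Rightarrow> nat \<Rightarrow> nat \<Rightarrow> enat" where
  "circ_dist n S i j = (if \<exists>k. circ_walk n S k i j
      then enat (LEAST k. circ_walk n S k i j) else \<infinity>)"

definition circ_diameter :: "nat \<Rightarrow> nat set \<Rightarrow> enat" where
  "circ_diameter n S = Sup {circ_dist n S i j | i j. i < n \<and> j < n}"

end

theory Submission
  imports Defs "HOL-Number_Theory.Cong"
begin

definition reach :: "nat \<Rightarrow> nat set \<Rightarrow> nat \<Rightarrow> int \<Rightarrow> bool" where
  "reach n S k x \<longleftrightarrow> (\<exists>xs. length xs = k \<and> set xs \<subseteq> S \<and> [int (sum_list xs) = x] (mod int n))"

lemma reach_add:
  assumes "reach n S a x" "reach n S b y" shows "reach n S (a+b) (x+y)"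
proof -
  obtain xs where xs: "length xs = a" "set xs \<subseteq> S" "[int (sum_list xs) = x] (mod int n)"
    using assms(1) unfolding reach_def by blast
  obtain ys where ys: "length ys = b" "set ys \<subseteq> S" "[int (sum_list ys) = y] (mod int n)"
    using assms(2) unfolding reach_def by blast
  have "[int (sum_list (xs@ys)) = x + y] (mod int n)"
    using cong_add[OF xs(3) ys(3)] by simp
  then show ?thesis unfolding reach_def using xs ys
    by (intro exI[of _ "xs@ys"]) auto
qed

lemma reach_cong: "reach n S k x \<Longrightarrow> [x = y] (mod int n) \<Longrightarrow> reach n S k y"
  unfolding reach_def using cong_trans by blast

lemma reach_single: "s \<in> S \<Longrightarrow> reach n S 1 (int s)"
  unfolding reach_def by (intro exI[of _ "[s]"]) auto

lemma reach_zero: "reach n S 0 0"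
  unfolding reach_def by (intro exI[of _ "[]"]) auto

lemma reach_sum:
  assumes "finite A" "\<forall>p\<in>A. reach n S (c p) (y p)"
  shows "reach n S (\<Sum>p\<in>A. c p) (\<Sum>p\<in>A. y p)"
  using assms
proof (induction A rule: finite_induct)
  case empty then show ?case using reach_zero by simp
next
  case (insert a A)
  then show ?case using reach_add[of n S "c a" "y a" "sum c A" "sum y A"] by simp
qed

lemma walk_imp_reach:
  assumes "n > 0" "circ_walk n S k i j"
  shows "reach n S k (int i - int j)"
proof -
  obtain f where f: "f 0 = i" "f k = j" "\<forall>t<k. circ_adj n S (f t) (f (Suc t))"
    using assms(2) unfolding circ_walk_def by blast
  define g where "g t = nat ((int (f t) - int (f (Suc t))) mod int n)" for t
  define xs where "xs = map g [0..<k]"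
  have len: "length xs = k" unfolding xs_def by simp
  have set: "set xs \<subseteq> S" unfolding xs_def g_def using f(3) unfolding circ_adj_def by auto
  have "int (sum_list xs) = (\<Sum>t\<in>{0..<k}. int (g t))"
    unfolding xs_def by (simp add: sum_set_upt_conv_sum_list_nat[symmetric])
  also have "\<dots> = (\<Sum>t<k. (int (f t) - int (f (Suc t))) mod int n)"
    unfolding g_def using assms(1) by (intro sum.cong) auto
  finally have e: "int (sum_list xs) = (\<Sum>t<k. (int (f t) - int (f (Suc t))) mod int n)" .
  have "[(\<Sum>t<k. (int (f t) - int (f (Suc t))) mod int n) = (\<Sum>t<k. (int (f t) - int (f (Suc t))))] (mod int n)"
    by (intro cong_sum) (simp add: cong_def)
  also have "(\<Sum>t<k. (int (f t) - int (f (Suc t)))) = int (f 0) - int (f k)"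
    by (rule sum_lessThan_telescope')
  finally show ?thesis unfolding reach_def using len set e f by auto
qed

lemma reach_imp_walk:
  assumes "i < n" "j < n" "\<forall>s\<in>S. s < n" "reach n S k (int i - int j)"
  shows "circ_walk n S k i j"
proof -
  obtain xs where xs: "length xs = k" "set xs \<subseteq> S" "[int (sum_list xs) = int i - int j] (mod int n)"
    using assms(4) unfolding reach_def by blast
  define f where "f t = nat ((int i - int (sum_list (take t xs))) mod int n)" for t
  have n0: "n > 0" using assms(1) by simp
  have fi: "int (f t) = (int i - int (sum_list (take t xs))) mod int n" for t
    unfolding f_def using n0 by simp
  have "f 0 = i" unfolding f_def using assms(1) by simp
  moreover have "f k = j"
  proof -
    have "[int i - int (sum_list xs) = int i - (int i - int j)] (mod int n)"
      by (intro cong_diff cong_refl xs(3))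
    then have "(int i - int (sum_list xs)) mod int n = int j mod int n"
      by (simp add: cong_def)
    then show ?thesis unfolding f_def using xs(1) assms(2) by simp
  qed
  moreover have "circ_adj n S (f t) (f (Suc t))" if t: "t < k" for t
  proof -
    have tk: "take (Suc t) xs = take t xs @ [xs ! t]" using t xs(1) by (simp add: take_Suc_conv_app_nth)
    have s: "xs ! t \<in> S" using t xs by auto
    then have sn: "xs ! t < n" using assms(3) by auto
    have "(int (f t) - int (f (Suc t))) mod int n
       = ((int i - int (sum_list (take t xs))) - (int i - int (sum_list (take t xs)) - int (xs ! t))) mod int n"
      unfolding fi tk by (simp add: mod_diff_eq)
    also have "\<dots> = int (xs ! t)" using sn by simp
    finally have "nat ((int (f t) - int (f (Suc t))) mod int n) = xs ! t" by simp
    moreover have "f t' < n" for t' unfolding f_def using n0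
      by (simp add: nat_less_iff)
    ultimately show ?thesis unfolding circ_adj_def using s by simp
  qed
  ultimately show ?thesis unfolding circ_walk_def by blast
qed

lemma dist_le: "circ_walk n S k i j \<Longrightarrow> circ_dist n S i j \<le> enat k"
  unfolding circ_dist_def by (auto intro: Least_le)

lemma dist_eq: "circ_walk n S k i j \<Longrightarrow> (\<forall>k'<k. \<not> circ_walk n S k' i j) \<Longrightarrow> circ_dist n S i j = enat k"
  unfolding circ_dist_def by (auto intro!: Least_equality) (meson not_less)

lemma diam_eq:
  assumes "\<And>i j. i < n \<Longrightarrow> j < n \<Longrightarrow> \<exists>k\<le>D. circ_walk n S k i j"
    and "i0 < n" "j0 < n" "circ_walk n S D i0 j0" "\<forall>k<D. \<not> circ_walk n S k i0 j0"
  shows "circ_diameter n S = enat D"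
  unfolding circ_diameter_def
proof (rule Sup_eqI)
  fix y assume "y \<in> {circ_dist n S i j |i j. i < n \<and> j < n}"
  then obtain i j where "i < n" "j < n" "y = circ_dist n S i j" by blast
  then obtain k where "k \<le> D" "circ_walk n S k i j" using assms(1) by blast
  then show "y \<le> enat D" using dist_le \<open>y = _\<close> by (metis enat_ord_simps(1) order_trans)
next
  fix y assume "\<And>z. z \<in> {circ_dist n S i j |i j. i < n \<and> j < n} \<Longrightarrow> z \<le> y"
  moreover have "circ_dist n S i0 j0 = enat D" using dist_eq assms(4,5) by blast
  ultimately show "enat D \<le> y" using assms(2,3) by (metis (mono_tags, lifting) mem_Collect_eq)
qed

lemma dvd_diff_nat_int: "(int q dvd int x - int a) \<longleftrightarrow> x mod q = a mod q"
proof -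
  have "(int q dvd int x - int a) \<longleftrightarrow> int x mod int q = int a mod int q"
    by (simp add: mod_eq_dvd_iff)
  also have "\<dots> \<longleftrightarrow> x mod q = a mod q" by (metis of_nat_eq_iff of_nat_mod)
  finally show ?thesis .
qed

lemma not_dvd_rest:
  assumes "finite P" "\<forall>q\<in>P. prime q" "p \<in> P"
  shows "\<not> p dvd \<Prod>(P - {p})"
proof
  assume "p dvd \<Prod>(P - {p})"
  then obtain q where "q \<in> P - {p}" "p dvd q"
    using prime_dvd_prod_iff[of "P - {p}" p id] assms by auto
  then show False using assms by (metis DiffE insertI1 primes_dvd_imp_eq)
qed

lemma prod_remove_nat: "finite P \<Longrightarrow> p \<in> P \<Longrightarrow> \<Prod>P = p * \<Prod>(P - {p})" for P :: "nat set"
  by (simp add: prod.remove)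

lemma gcd_char:
  assumes "finite P" "\<forall>q\<in>P. prime q" "p \<in> P" "int p dvd y" "\<forall>q\<in>P-{p}. \<not> int q dvd y"
  shows "gcd y (int (\<Prod>P)) = int p"
proof -
  define N where "N = int (\<Prod>(P - {p}))"
  have N: "N = (\<Prod>q\<in>P-{p}. int q)" unfolding N_def by simp
  have cop: "coprime y N" unfolding N
  proof (rule prod_coprime_right)
    fix q assume q: "q \<in> P - {p}"
    then have "prime (int q)" using assms(2) by auto
    then show "coprime y (int q)" using prime_imp_coprime assms(5) q
      by (metis coprime_commute)
  qed
  have "int (\<Prod>P) = int p * N" unfolding N_def using prod_remove_nat[OF assms(1,3)] by simp
  then have "gcd y (int (\<Prod>P)) = gcd (int p * N) y" by (simp add: gcd.commute)
  also have "\<dots> = gcd (int p) y" using gcd_mult_left_right_cancel[OF cop] by simp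
  also have "\<dots> = int p" using assms(4) by simp
  finally show ?thesis .
qed

lemma elem:
  assumes "0 < n" "d < n" "gcd y (int n) = int d"
  shows "nat (y mod int n) \<in> Gn n d \<and> [int (nat (y mod int n)) = y] (mod int n)"
proof -
  have g: "gcd (y mod int n) (int n) = int d" using assms by simp
  have nz: "y mod int n \<noteq> 0" using g assms(2) by auto
  have ge: "y mod int n \<ge> 0" "y mod int n < int n" using assms(1) by auto
  have "gcd (nat (y mod int n)) n = d" using g ge
    by (metis gcd_int_int_eq int_nat_eq nat_int)
  moreover have "1 \<le> nat (y mod int n)" "nat (y mod int n) \<le> n - 1" using nz ge by auto
  ultimately have "nat (y mod int n) \<in> Gn n d" unfolding Gn_def by simp
  moreover have "[int (nat (y mod int n)) = y] (mod int n)" using ge by (simp add: cong_def)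
  ultimately show ?thesis by blast
qed

lemma split2:
  assumes fin: "finite P" and pr: "\<forall>q\<in>P. prime q \<and> odd q" and p: "p \<in> P" and p': "p' \<in> P"
    and eq: "p = p' \<longrightarrow> p dvd x" and ne: "p \<noteq> p' \<longrightarrow> \<not> p dvd x \<and> \<not> p' dvd x"
  shows "\<exists>a b::int. int x = a + b \<and> gcd a (int (\<Prod>P)) = int p \<and> gcd b (int (\<Prod>P)) = int p'"
proof -
  define c where "c q = (if x mod q = 1 then 2 else 1::nat)" for q
  define u where "u q = (if q = p then 0 else if q = p' then x mod q else c q)" for q
  have cop: "\<forall>i\<in>P. \<forall>j\<in>P. i \<noteq> j \<longrightarrow> coprime (id i) (id j)"
    using pr by (auto intro: primes_coprime)
  obtain a where a: "\<forall>q\<in>P. [a = u q] (mod id q)"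
    using chinese_remainder_nat[OF fin cop, of u] by blast
  have amod: "a mod q = u q mod q" if "q \<in> P" for q using a that by (simp add: cong_def)
  have q3: "q \<ge> 3" if "q \<in> P" for q
  proof -
    have "q \<ge> 2" "odd q" using pr that prime_ge_2_nat by auto
    then show ?thesis by presburger
  qed
  have cmod: "c q mod q = c q" "c q \<noteq> 0" "c q mod q \<noteq> x mod q" if "q \<in> P" for q
    using q3[OF that] unfolding c_def by auto
  have prP: "\<forall>q\<in>P. prime q" using pr by auto
  have g1: "gcd (int a) (int (\<Prod>P)) = int p"
  proof (rule gcd_char[OF fin prP p])
    show "int p dvd int a" unfolding int_dvd_int_iff using amod[OF p] unfolding u_def by (simp add: dvd_eq_mod_eq_0)
    show "\<forall>q\<in>P - {p}. \<not> int q dvd int a"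
    proof
      fix q assume q: "q \<in> P - {p}"
      have "a mod q \<noteq> 0"
      proof (cases "q = p'")
        case True then show ?thesis using amod[of q] q ne unfolding u_def by (auto simp: dvd_eq_mod_eq_0)
      next
        case False then show ?thesis using amod[of q] q cmod[of q] unfolding u_def by auto
      qed
      then show "\<not> int q dvd int a" unfolding int_dvd_int_iff by (simp add: dvd_eq_mod_eq_0)
    qed
  qed
  have g2: "gcd (int x - int a) (int (\<Prod>P)) = int p'"
  proof (rule gcd_char[OF fin prP p'])
    show "int p' dvd int x - int a" unfolding dvd_diff_nat_int
      using amod[OF p'] eq unfolding u_def by (auto simp: dvd_eq_mod_eq_0)
    show "\<forall>q\<in>P - {p'}. \<not> int q dvd int x - int a"
    proof
      fix q assume q: "q \<in> P - {p'}"
      have "x mod q \<noteq> a mod q"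
      proof (cases "q = p")
        case True then show ?thesis using amod[of q] q ne unfolding u_def by (auto simp: dvd_eq_mod_eq_0)
      next
        case False then show ?thesis using amod[of q] q cmod[of q] unfolding u_def by auto
      qed
      then show "\<not> int q dvd int x - int a" unfolding dvd_diff_nat_int by simp
    qed
  qed
  show ?thesis using g1 g2 by (intro exI[of _ "int a"] exI[of _ "int x - int a"]) auto
qed

lemma part1_reach2:
  assumes fin: "finite P" and c2: "card P \<ge> 2" and pr: "\<forall>q\<in>P. prime q \<and> odd q"
  shows "reach (\<Prod>P) (\<Union>d\<in>P. Gn (\<Prod>P) d) 2 (int x)"
proof -
  let ?n = "\<Prod>P"
  let ?S = "\<Union>d\<in>P. Gn (\<Prod>P) d"
  have "\<exists>p\<in>P. \<exists>p'\<in>P. (p = p' \<longrightarrow> p dvd x) \<and> (p \<noteq> p' \<longrightarrow> \<not> p dvd x \<and> \<not> p' dvd x)"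
  proof (cases "\<exists>p\<in>P. p dvd x")
    case True then show ?thesis by blast
  next
    case False
    obtain p where p: "p \<in> P" using c2 by fastforce
    have "card (P - {p}) \<ge> 1" using c2 p fin by simp
    then have "P - {p} \<noteq> {}" by (metis card.empty not_one_le_zero)
    then obtain p' where "p' \<in> P - {p}" by blast
    then show ?thesis using p False by blast
  qed
  then obtain p p' where pp: "p \<in> P" "p' \<in> P" "p = p' \<longrightarrow> p dvd x" "p \<noteq> p' \<longrightarrow> \<not> p dvd x \<and> \<not> p' dvd x"
    by blast
  obtain a b where ab: "int x = a + b" "gcd a (int ?n) = int p" "gcd b (int ?n) = int p'"
    using split2[OF fin pr pp] by blast
  have pos: "0 < ?n" using fin pr by (simp add: prime_gt_0_nat prod_pos)
  have lt: "d < ?n" if "d \<in> P" for d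
  proof -
    have "?n = d * \<Prod>(P - {d})" using prod_remove_nat[OF fin that] .
    moreover have "\<Prod>(P - {d}) \<noteq> 1"
    proof
      assume "\<Prod>(P - {d}) = 1"
      moreover have "card (P - {d}) \<ge> 1" using c2 that fin by simp
      then have "P - {d} \<noteq> {}" by (metis card.empty not_one_le_zero)
      then obtain e where "e \<in> P - {d}" by blast
      moreover have "e dvd \<Prod>(P - {d})" using fin calculation(2) by (intro dvd_prodI) auto
      ultimately show False using pr by (metis DiffD1 nat_dvd_1_iff_1 not_prime_1)
    qed
    moreover have "\<Prod>(P - {d}) > 0" using fin pr by (simp add: prime_gt_0_nat prod_pos)
    moreover have "d > 0" using pr that prime_gt_0_nat by auto
    ultimately show ?thesis by (metis One_nat_def less_1_mult linorder_neqE_nat mult.right_neutral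
          nat_mult_less_cancel_disj not_less_eq)
  qed
  obtain sa where sa: "sa \<in> Gn ?n p" "[int sa = a] (mod int ?n)" using elem[OF pos lt[OF pp(1)] ab(2)] by blast
  obtain sb where sb: "sb \<in> Gn ?n p'" "[int sb = b] (mod int ?n)" using elem[OF pos lt[OF pp(2)] ab(3)] by blast
  have "reach ?n ?S 1 a" using reach_cong[OF reach_single sa(2)] sa(1) pp(1) by blast
  moreover have "reach ?n ?S 1 b" using reach_cong[OF reach_single sb(2)] sb(1) pp(2) by blast
  ultimately have "reach ?n ?S (1+1) (a+b)" by (rule reach_add)
  then show ?thesis using ab(1) by (simp add: numeral_2_eq_2)
qed

lemma part1:
  assumes fin: "finite P" and c3: "card P \<ge> 3" and pr: "\<forall>q\<in>P. prime q \<and> odd q"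
  shows "circ_diameter (\<Prod>P) (\<Union>d\<in>P. Gn (\<Prod>P) d) = 2"
proof -
  let ?n = "\<Prod>P"
  let ?S = "\<Union>d\<in>P. Gn (\<Prod>P) d"
  have c2: "card P \<ge> 2" using c3 by simp
  have pos: "0 < ?n" using fin pr by (simp add: prime_gt_0_nat prod_pos)
  obtain p where p: "p \<in> P" using c3 by (metis card.empty ex_in_conv not_numeral_le_zero)
  have "p dvd ?n" using fin p by (intro dvd_prodI) auto
  then have "p \<le> ?n" using pos by (simp add: dvd_imp_le)
  moreover have "p \<ge> 2" using pr p prime_ge_2_nat by auto
  ultimately have n2: "?n \<ge> 2" by simp
  have Sn: "\<forall>s\<in>?S. s < ?n" using pos unfolding Gn_def by auto
  have walk: "circ_walk ?n ?S 2 i j" if "i < ?n" "j < ?n" for i j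
  proof -
    define x where "x = nat ((int i - int j) mod int ?n)"
    have "reach ?n ?S 2 (int x)" by (rule part1_reach2[OF fin c2 pr])
    moreover have "[int x = int i - int j] (mod int ?n)" unfolding x_def using pos by (simp add: cong_def del: of_nat_prod)
    ultimately have "reach ?n ?S 2 (int i - int j)" by (rule reach_cong)
    then show ?thesis using reach_imp_walk that Sn by blast
  qed
  have no: "\<forall>k<2. \<not> circ_walk ?n ?S k 1 0"
  proof (intro allI impI notI)
    fix k assume k: "k < (2::nat)" and w: "circ_walk ?n ?S k 1 0"
    have "reach ?n ?S k (int 1 - int 0)" using walk_imp_reach[OF pos w] .
    then obtain xs where xs: "length xs = k" "set xs \<subseteq> ?S" "[int (sum_list xs) = 1] (mod int ?n)"
      unfolding reach_def by auto
    show False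
    proof (cases k)
      case 0 then show ?thesis using xs n2 by (auto simp: cong_def zmod_int[symmetric] simp del: of_nat_prod)
    next
      case (Suc k')
      then have "k = 1" using k by simp
      then obtain s where s: "xs = [s]" using xs(1) by (metis One_nat_def length_0_conv length_Suc_conv)
      then have sS: "s \<in> ?S" using xs by auto
      then have "s < ?n" using Sn by auto
      moreover have "[int s = 1] (mod int ?n)" using xs s by simp
      ultimately have "s = 1" using n2 by (auto simp: cong_def zmod_int[symmetric] simp del: of_nat_prod)
      then obtain d where "d \<in> P" "gcd 1 ?n = d" using sS unfolding Gn_def by auto
      then show False using pr by auto
    qed
  qed
  have "circ_diameter ?n ?S = enat 2"
    by (rule diam_eq[of ?n 2 ?S 1 0]) (use walk n2 no in auto)
  then show ?thesis by (simp add: numeral_eq_enat)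
qed

lemma odd_prod_primes:
  fixes P :: "nat set"
  assumes "finite P" "\<forall>q\<in>P. prime q \<and> odd q"
  shows "odd (\<Prod>P)"
proof
  assume "even (\<Prod>P)"
  then obtain q where "q \<in> P" "2 dvd q"
    using prime_dvd_prod_iff[of P 2 id] assms(1) two_is_prime_nat by auto
  then show False using assms(2) by auto
qed

lemma mdiv:
  fixes P :: "nat set"
  assumes "finite P" "p \<in> P" "\<forall>q\<in>P. prime q"
  shows "\<Prod>P div p = \<Prod>(P - {p})" "\<Prod>P = p * (\<Prod>P div p)"
proof -
  have p0: "p > 0" using assms prime_gt_0_nat by auto
  show "\<Prod>P div p = \<Prod>(P - {p})" using prod_remove_nat[OF assms(1,2)] p0 by simp
  then show "\<Prod>P = p * (\<Prod>P div p)" using prod_remove_nat[OF assms(1,2)] by simp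
qed

lemma n_factor:
  fixes P :: "nat set"
  assumes "finite P" "p \<in> P" "\<forall>q\<in>P. prime q"
  shows "2 * (\<Prod>P)^2 = (\<Prod>P div p)^2 * (2 * p^2)"
proof -
  have "(\<Prod>P)^2 = (p * (\<Prod>P div p))^2" using mdiv(2)[OF assms] by simp
  then show ?thesis by (simp add: power_mult_distrib)
qed

lemma elem_props:
  fixes P :: "nat set"
  assumes fin: "finite P" and pr: "\<forall>q\<in>P. prime q \<and> odd q" and p: "p \<in> P"
    and s: "s \<in> Gn (2 * (\<Prod>P)^2) ((\<Prod>P div p)^2)"
  shows "odd s" "\<not> p dvd s" "\<forall>q\<in>P-{p}. q^2 dvd s"
proof -
  let ?m = "\<Prod>P" let ?R = "\<Prod>P div p"
  have prP: "\<forall>q\<in>P. prime q" using pr by auto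
  have g: "gcd s (2 * ?m^2) = ?R^2" using s unfolding Gn_def by auto
  have R: "?R = \<Prod>(P - {p})" using mdiv(1)[OF fin p prP] .
  have Rm: "?R dvd ?m" using mdiv(2)[OF fin p prP] by (metis dvd_triv_right)
  have mo: "odd ?m" using odd_prod_primes[OF fin pr] .
  show "odd s"
  proof
    assume "even s"
    then have "2 dvd gcd s (2 * ?m^2)" by simp
    then have "2 dvd ?R^2" using g by simp
    then have "2 dvd ?R" using prime_dvd_power[of 2] using two_is_prime_nat by blast
    then show False using Rm mo by (meson dvd_trans)
  qed
  show "\<not> p dvd s"
  proof
    assume "p dvd s"
    moreover have "p dvd ?m" using dvd_prodI[OF fin p, of "\<lambda>x. x"] by simp
    then have "p dvd 2 * ?m^2" by (metis dvd_mult dvd_mult2 power2_eq_square)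
    ultimately have "p dvd ?R^2" using g by (metis gcd_greatest)
    then have "p dvd ?R" using prime_dvd_power p prP by blast
    then show False using not_dvd_rest[OF fin prP p] R by simp
  qed
  show "\<forall>q\<in>P-{p}. q^2 dvd s"
  proof
    fix q assume q: "q \<in> P - {p}"
    have "q dvd ?R" unfolding R using fin q by (intro dvd_prodI) auto
    then have "q^2 dvd ?R^2" by simp
    also have "?R^2 dvd s" using g by (metis gcd_dvd1)
    finally show "q^2 dvd s" .
  qed
qed

lemma elem2:
  fixes P :: "nat set"
  assumes fin: "finite P" and pr: "\<forall>q\<in>P. prime q \<and> odd q" and p: "p \<in> P"
    and u: "odd u" "\<not> int p dvd u"
  shows "\<exists>s\<in>Gn (2 * (\<Prod>P)^2) ((\<Prod>P div p)^2). [int s = int ((\<Prod>P div p)^2) * u] (mod int (2 * (\<Prod>P)^2))"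
proof -
  let ?m = "\<Prod>P" let ?R = "\<Prod>P div p" let ?n = "2 * (\<Prod>P)^2"
  have prP: "\<forall>q\<in>P. prime q" using pr by auto
  have nf: "?n = ?R^2 * (2 * p^2)" using n_factor[OF fin p prP] .
  have p1: "p > 1" using p prP prime_gt_1_nat by auto
  have R0: "?R > 0" using mdiv[OF fin p prP] fin prP
    by (metis gr0I mult_0_right prime_gt_0_nat prod_pos)
  have cop: "coprime u (2 * int p ^ 2)"
  proof -
    have "coprime u 2" using u(1) by (simp add: coprime_right_2_iff_odd)
    moreover have "coprime u (int p)" using prime_imp_coprime[of "int p" u] u(2) p prP
      by (auto simp: coprime_commute)
    ultimately show ?thesis by simp
  qed
  have "gcd (int (?R^2) * u) (int ?n) = int (?R^2) * gcd u (2 * int p ^ 2)"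
    unfolding nf by (simp add: gcd_mult_distrib_int[symmetric])
  also have "\<dots> = int (?R^2)" using cop by simp
  finally have g: "gcd (int (?R^2) * u) (int ?n) = int (?R^2)" .
  have pp: "p^2 > 0" using p1 by simp
  have pos: "0 < ?n" using nf R0 pp by simp
  have "2 * p^2 > 1" using pp by linarith
  then have lt: "?R^2 < ?n" using nf R0 by simp
  show ?thesis using elem[OF pos lt g] by blast
qed

lemma decomp:
  fixes a :: int
  assumes "even a" "prime p" "odd p"
  shows "\<exists>u v. a = u + v \<and> odd u \<and> odd v \<and> \<not> int p dvd u \<and> \<not> int p dvd v"
proof -
  have "p \<ge> 2" using assms(2) prime_ge_2_nat by auto
  then have "p \<ge> 3" using assms(3) by presburger
  then have p3: "int p \<ge> 3" by simp
  show ?thesis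
  proof (cases "int p dvd a - 1")
    case True
    have "\<not> int p dvd a + 1"
    proof
      assume "int p dvd a + 1"
      then have "int p dvd (a + 1) - (a - 1)" using True by (rule dvd_diff)
      then have "int p dvd 2" by simp
      then show False using p3 by (auto dest: zdvd_imp_le)
    qed
    moreover have "\<not> int p dvd -1" using p3 by auto
    ultimately show ?thesis using assms(1) by (intro exI[of _ "-1"] exI[of _ "a+1"]) auto
  next
    case False
    moreover have "\<not> int p dvd 1" using p3 by auto
    ultimately show ?thesis using assms(1) by (intro exI[of _ "1"] exI[of _ "a - 1"]) auto
  qed
qed

lemma prod_sq_dvd:
  fixes z :: int and P :: "nat set"
  assumes "finite P" "\<forall>q\<in>P. prime q" "\<forall>q\<in>P. int q ^ 2 dvd z"
  shows "int (\<Prod>P) ^ 2 dvd z"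
  using assms
proof (induction P rule: finite_induct)
  case empty then show ?case by simp
next
  case (insert q A)
  have "\<not> q dvd \<Prod>A"
  proof
    assume "q dvd \<Prod>A"
    then obtain r where "r \<in> A" "q dvd r" using prime_dvd_prod_iff[of A q id] insert by auto
    then show False using insert by (metis insertCI primes_dvd_imp_eq)
  qed
  then have "coprime q (\<Prod>A)" using prime_imp_coprime insert by auto
  then have "coprime (int q) (int (\<Prod>A))" by (simp only: coprime_int_iff)
  then have "coprime (int q ^ 2) (int (\<Prod>A) ^ 2)" by (simp del: of_nat_prod)
  moreover have "int (\<Prod>A) ^ 2 dvd z" using insert by auto
  moreover have "int q ^ 2 dvd z" using insert by auto
  ultimately have "int q ^ 2 * int (\<Prod>A) ^ 2 dvd z" using divides_mult by blast
  then show ?case using insert by (simp add: power_mult_distrib)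
qed

definition nn :: "nat set \<Rightarrow> nat" where "nn P = 2 * (\<Prod>P)^2"
definition SS :: "nat set \<Rightarrow> nat set" where
  "SS P = (\<Union>d\<in>(\<lambda>p. (\<Prod>P div p)^2) ` P. Gn (2 * (\<Prod>P)^2) d)"

lemma SS_mem: "s \<in> SS P \<longleftrightarrow> (\<exists>p\<in>P. s \<in> Gn (nn P) ((\<Prod>P div p)^2))"
  unfolding SS_def nn_def by auto

lemma even_reach:
  fixes P :: "nat set" and x :: int
  assumes fin: "finite P" and pr: "\<forall>q\<in>P. prime q \<and> odd q" and ev: "even x"
  shows "reach (nn P) (SS P) (2 * card P) x"
proof -
  let ?m = "\<Prod>P"
  have prP: "\<forall>q\<in>P. prime q" using pr by auto
  have each: "\<exists>y. reach (nn P) (SS P) 2 y \<and> even y \<and> int p ^ 2 dvd y - x \<and> (\<forall>q\<in>P-{p}. int q ^ 2 dvd y)"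
    if p: "p \<in> P" for p
  proof -
    define R where "R = ?m div p"
    have R: "R = \<Prod>(P - {p})" unfolding R_def using mdiv(1)[OF fin p prP] .
    have "\<not> p dvd R" unfolding R using not_dvd_rest[OF fin prP p] .
    then have c1: "coprime p R" using prime_imp_coprime[of p R] p prP by auto
    have c2: "coprime p 2" using pr p by (simp add: coprime_right_2_iff_odd)
    have c3: "coprime (int p) (int R)" using c1 by (simp only: coprime_int_iff)
    have c4: "coprime (int p) 2" using pr p by (simp add: coprime_right_2_iff_odd)
    have "coprime (int p) (2 * int R ^ 2)" using c3 c4 by simp
    then have "coprime (2 * int (R^2)) (int p ^ 2)" by (simp add: coprime_commute)
    then obtain w where w: "[2 * int (R^2) * w = 1] (mod int p ^ 2)"
      using cong_solve_coprime_int by blast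
    define a where "a = 2 * w * x"
    have ea: "even a" unfolding a_def by simp
    obtain u v where uv: "a = u + v" "odd u" "odd v" "\<not> int p dvd u" "\<not> int p dvd v"
      using decomp[OF ea, of p] p pr by auto
    obtain su where su: "su \<in> Gn (2 * ?m^2) (R^2)" "[int su = int (R^2) * u] (mod int (2 * ?m^2))"
      using elem2[OF fin pr p uv(2,4)] unfolding R_def by blast
    obtain sv where sv: "sv \<in> Gn (2 * ?m^2) (R^2)" "[int sv = int (R^2) * v] (mod int (2 * ?m^2))"
      using elem2[OF fin pr p uv(3,5)] unfolding R_def by blast
    have "su \<in> SS P" "sv \<in> SS P" using su(1) sv(1) p unfolding SS_mem nn_def R_def by auto
    then have "reach (nn P) (SS P) 1 (int (R^2) * u)" "reach (nn P) (SS P) 1 (int (R^2) * v)"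
      using reach_cong[OF reach_single] su(2) sv(2) unfolding nn_def by blast+
    then have "reach (nn P) (SS P) (1+1) (int (R^2) * u + int (R^2) * v)" by (rule reach_add)
    then have r2: "reach (nn P) (SS P) 2 (int (R^2) * a)" using uv(1)
      by (simp add: distrib_left numeral_2_eq_2)
    have "int p ^ 2 dvd 2 * int (R^2) * w - 1" using w by (simp add: cong_iff_dvd_diff)
    then have "int p ^ 2 dvd (2 * int (R^2) * w - 1) * x" by simp
    then have d1: "int p ^ 2 dvd int (R^2) * a - x" unfolding a_def by (simp add: algebra_simps)
    have d2: "int q ^ 2 dvd int (R^2) * a" if q: "q \<in> P - {p}" for q
    proof -
      have "q dvd R" unfolding R using fin q by (intro dvd_prodI) auto
      then have "q^2 dvd R^2" by simp
      then have "int q ^ 2 dvd int (R^2)" by (metis int_dvd_int_iff of_nat_power)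
      then show ?thesis by simp
    qed
    show ?thesis using r2 ea d1 d2 by (intro exI[of _ "int (R^2) * a"]) auto
  qed
  then have "\<forall>p\<in>P. \<exists>y. reach (nn P) (SS P) 2 y \<and> even y \<and> int p ^ 2 dvd y - x \<and> (\<forall>q\<in>P-{p}. int q ^ 2 dvd y)"
    by blast
  from bchoice[OF this] obtain y where y: "\<forall>p\<in>P. reach (nn P) (SS P) 2 (y p) \<and> even (y p) \<and> int p ^ 2 dvd y p - x \<and> (\<forall>q\<in>P-{p}. int q ^ 2 dvd y p)"
    ..
  have r: "reach (nn P) (SS P) (\<Sum>p\<in>P. 2) (\<Sum>p\<in>P. y p)"
    by (rule reach_sum[OF fin]) (use y in blast)
  define z where "z = (\<Sum>p\<in>P. y p) - x"
  have z2: "2 dvd z" unfolding z_def using y ev by (intro dvd_diff dvd_sum) auto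
  have zp: "int p ^ 2 dvd z" if p: "p \<in> P" for p
  proof -
    have "z = (y p - x) + (\<Sum>q\<in>P-{p}. y q)" unfolding z_def using sum.remove[OF fin p, of y] by simp
    moreover have "int p ^ 2 dvd (\<Sum>q\<in>P-{p}. y q)" using y p by (intro dvd_sum) auto
    ultimately show ?thesis using y p by auto
  qed
  have zm: "int ?m ^ 2 dvd z" using prod_sq_dvd[OF fin prP] zp by blast
  have "odd ?m" using odd_prod_primes[OF fin pr] .
  then have "coprime 2 (int ?m ^ 2)" by (simp add: coprime_left_2_iff_odd del: of_nat_prod)
  then have "2 * int ?m ^ 2 dvd z" using z2 zm divides_mult by blast
  then have "[(\<Sum>p\<in>P. y p) = x] (mod int (nn P))" unfolding nn_def z_def
    by (simp add: cong_iff_dvd_diff del: of_nat_prod)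
  then show ?thesis using reach_cong[OF r] by (simp add: mult.commute)
qed

lemma odd_reach:
  fixes P :: "nat set" and x :: int
  assumes fin: "finite P" and c1: "card P \<ge> 1" and pr: "\<forall>q\<in>P. prime q \<and> odd q" and od: "odd x"
  shows "reach (nn P) (SS P) (2 * card P + 1) x"
proof -
  let ?m = "\<Prod>P"
  have prP: "\<forall>q\<in>P. prime q" using pr by auto
  obtain p where p: "p \<in> P" using c1 by (metis card.empty ex_in_conv not_one_le_zero)
  define R where "R = ?m div p"
  have "\<not> int p dvd 1" using p prP by (metis int_dvd_int_iff of_nat_1 nat_dvd_1_iff_1 not_prime_1)
  then obtain s where s: "s \<in> Gn (2 * ?m^2) (R^2)" "[int s = int (R^2) * 1] (mod int (2 * ?m^2))"
    using elem2[OF fin pr p, of 1] unfolding R_def by auto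
  have "s \<in> SS P" using s(1) p unfolding SS_mem nn_def R_def by auto
  then have r1: "reach (nn P) (SS P) 1 (int (R^2))" using reach_cong[OF reach_single] s(2) unfolding nn_def by simp
  have "R dvd ?m" unfolding R_def using mdiv(2)[OF fin p prP] by (metis dvd_triv_right)
  then have "odd R" using odd_prod_primes[OF fin pr] by (meson dvd_trans)
  then have "even (x - int (R^2))" using od by simp
  then have r2: "reach (nn P) (SS P) (2 * card P) (x - int (R^2))" using even_reach[OF fin pr] by blast
  show ?thesis using reach_add[OF r1 r2] by simp
qed

lemma odd_sum_list: "(\<forall>s\<in>set xs. odd (s::nat)) \<Longrightarrow> odd (sum_list xs) \<longleftrightarrow> odd (length xs)"
  by (induction xs) auto

lemma sq_not_dvd:
  fixes P :: "nat set"
  assumes fin: "finite P" and prP: "\<forall>q\<in>P. prime q" and q: "q \<in> P"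
  shows "\<not> q^2 dvd \<Prod>P"
proof
  assume "q^2 dvd \<Prod>P"
  then have "q * q dvd q * \<Prod>(P - {q})" using prod_remove_nat[OF fin q] by (simp add: power2_eq_square)
  moreover have "q > 0" using prP q prime_gt_0_nat by auto
  ultimately have "q dvd \<Prod>(P - {q})" by simp
  then show False using not_dvd_rest[OF fin prP q] by simp
qed

lemma lower:
  fixes P :: "nat set"
  assumes fin: "finite P" and pr: "\<forall>q\<in>P. prime q \<and> odd q"
    and r: "reach (nn P) (SS P) k (int (\<Prod>P))"
  shows "2 * card P + 1 \<le> k"
proof -
  let ?m = "\<Prod>P"
  have prP: "\<forall>q\<in>P. prime q" using pr by auto
  obtain xs where xs: "length xs = k" "set xs \<subseteq> SS P" "[int (sum_list xs) = int ?m] (mod int (nn P))"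
    using r unfolding reach_def by blast
  have cn: "[sum_list xs = ?m] (mod nn P)" using xs(3) by (simp only: cong_int_iff)
  have lab: "\<exists>p\<in>P. odd s \<and> \<not> p dvd s \<and> (\<forall>q\<in>P-{p}. q^2 dvd s)" if "s \<in> set xs" for s
  proof -
    have "s \<in> SS P" using that xs(2) by blast
    then obtain p where p: "p \<in> P" "s \<in> Gn (nn P) ((?m div p)^2)" unfolding SS_mem by blast
    have "s \<in> Gn (2 * ?m^2) ((?m div p)^2)" using p(2) unfolding nn_def .
    note props = elem_props[OF fin pr p(1) this]
    show ?thesis using props p(1) by blast
  qed
  have "[sum_list xs = ?m] (mod 2)" using cn by (rule cong_dvd_modulus_nat) (simp add: nn_def)
  moreover have "odd ?m" using odd_prod_primes[OF fin pr] .
  ultimately have "odd (sum_list xs)" by (simp add: cong_def odd_iff_mod_2_eq_one)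
  moreover have "\<forall>s\<in>set xs. odd s" using lab by blast
  ultimately have ok: "odd k" using odd_sum_list xs(1) by blast
  define L where "L q = {t. t < k \<and> \<not> q dvd xs ! t}" for q
  have Lsub: "L q \<subseteq> {0..<k}" for q unfolding L_def by auto
  have finL: "finite (L q)" for q using Lsub finite_subset by blast
  have dq2: "q^2 dvd xs ! t" if "q \<in> P" "t < k" "q dvd xs ! t" for q t
  proof -
    have "xs ! t \<in> set xs" using that xs(1) by simp
    then obtain p where p: "p \<in> P" "\<not> p dvd xs ! t" "\<forall>q\<in>P-{p}. q^2 dvd xs ! t" using lab by blast
    then have "q \<noteq> p" using that by auto
    then show ?thesis using p that by auto
  qed
  have L2: "card (L q) \<ge> 2" if q: "q \<in> P" for q
  proof (rule ccontr)
    assume "\<not> card (L q) \<ge> 2"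
    then have c01: "card (L q) = 0 \<or> card (L q) = 1" by linarith
    have sl: "sum_list xs = (\<Sum>t\<in>{0..<k} - L q. xs ! t) + (\<Sum>t\<in>L q. xs ! t)"
      unfolding sum_list_sum_nth xs(1) using sum.subset_diff[OF Lsub, of "\<lambda>t. xs ! t"] by simp
    have rest: "q^2 dvd (\<Sum>t\<in>{0..<k} - L q. xs ! t)"
      by (rule dvd_sum) (use dq2 q in \<open>auto simp: L_def\<close>)
    have qm: "q dvd ?m" using fin q by (intro dvd_prodI) auto
    have "q^2 dvd nn P" unfolding nn_def using qm by (simp add: power_mult_distrib dvd_power_same)
    then have c2: "[sum_list xs = ?m] (mod q^2)" using cn by (rule cong_dvd_modulus_nat[rotated])
    have "q dvd q^2" by (simp add: power2_eq_square)
    then have c1: "[sum_list xs = ?m] (mod q)" using c2 by (rule cong_dvd_modulus_nat[rotated])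
    show False
    proof (cases "card (L q) = 0")
      case True
      then have "L q = {}" using finL by simp
      then have "q^2 dvd sum_list xs" using sl rest by simp
      then have "q^2 dvd ?m" using c2 cong_dvd_iff by blast
      then show False using sq_not_dvd[OF fin prP q] by simp
    next
      case False
      then have "card (L q) = 1" using c01 by simp
      then obtain t0 where t0: "L q = {t0}" using card_1_singletonE by blast
      have "q dvd sum_list xs" using c1 qm cong_dvd_iff by blast
      moreover have "q dvd (\<Sum>t\<in>{0..<k} - L q. xs ! t)" using rest \<open>q dvd q^2\<close> dvd_trans by blast
      ultimately have "q dvd xs ! t0" using sl t0 by (simp add: dvd_add_right_iff)
      moreover have "t0 \<in> L q" using t0 by simp
      ultimately show False unfolding L_def by simp
    qed
  qed
  have disj: "\<forall>q\<in>P. \<forall>q'\<in>P. q \<noteq> q' \<longrightarrow> L q \<inter> L q' = {}"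
  proof (intro ballI impI)
    fix q q' assume qq: "q \<in> P" "q' \<in> P" "q \<noteq> q'"
    show "L q \<inter> L q' = {}"
    proof (rule ccontr)
      assume "L q \<inter> L q' \<noteq> {}"
      then obtain t where t: "t < k" "\<not> q dvd xs ! t" "\<not> q' dvd xs ! t" unfolding L_def by auto
      have "xs ! t \<in> set xs" using t xs(1) by simp
      then obtain p where p: "p \<in> P" "\<forall>r\<in>P-{p}. r^2 dvd xs ! t" using lab by blast
      have "q = p"
      proof (rule ccontr)
        assume "q \<noteq> p"
        then have "q^2 dvd xs ! t" using p qq by auto
        then have "q dvd xs ! t" by (metis dvd_mult_left power2_eq_square)
        then show False using t by simp
      qed
      moreover have "q' = p"
      proof (rule ccontr)
        assume "q' \<noteq> p"
        then have "q'^2 dvd xs ! t" using p qq by auto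
        then have "q' dvd xs ! t" by (metis dvd_mult_left power2_eq_square)
        then show False using t by simp
      qed
      ultimately show False using qq by simp
    qed
  qed
  have "card (\<Union>q\<in>P. L q) = (\<Sum>q\<in>P. card (L q))"
    by (rule card_UN_disjoint[OF fin]) (use finL disj in auto)
  moreover have "(\<Sum>q\<in>P. card (L q)) \<ge> (\<Sum>q\<in>P. 2)" by (rule sum_mono) (use L2 in auto)
  moreover have "card (\<Union>q\<in>P. L q) \<le> k"
  proof -
    have "(\<Union>q\<in>P. L q) \<subseteq> {0..<k}" using Lsub by auto
    then show ?thesis using card_mono[of "{0..<k}"] by fastforce
  qed
  ultimately have "2 * card P \<le> k" by simp
  then show ?thesis using ok by presburger
qed

lemma part2:
  fixes P :: "nat set"
  assumes fin: "finite P" and c1: "card P \<ge> 1" and pr: "\<forall>q\<in>P. prime q \<and> odd q"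
  shows "circ_diameter (nn P) (SS P) = enat (2 * card P + 1)"
proof -
  let ?m = "\<Prod>P" let ?D = "2 * card P + 1"
  have prP: "\<forall>q\<in>P. prime q" using pr by auto
  have mpos: "?m > 0" using fin prP by (simp add: prime_gt_0_nat prod_pos)
  have npos: "nn P > 0" unfolding nn_def using mpos by simp
  have mn: "?m < nn P" unfolding nn_def using mpos by (simp add: power2_eq_square)
  have Sn: "\<forall>s\<in>SS P. s < nn P"
  proof
    fix s assume "s \<in> SS P"
    then obtain p where "s \<in> Gn (nn P) ((?m div p)^2)" unfolding SS_mem by blast
    then show "s < nn P" using npos unfolding Gn_def by auto
  qed
  have walk: "\<exists>k\<le>?D. circ_walk (nn P) (SS P) k i j" if "i < nn P" "j < nn P" for i j
  proof (cases "even (int i - int j)")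
    case True
    then have "reach (nn P) (SS P) (2 * card P) (int i - int j)" using even_reach[OF fin pr] by blast
    then show ?thesis using reach_imp_walk that Sn by (intro exI[of _ "2 * card P"]) auto
  next
    case False
    then have "reach (nn P) (SS P) ?D (int i - int j)" using odd_reach[OF fin c1 pr] by blast
    then show ?thesis using reach_imp_walk that Sn by (intro exI[of _ ?D]) auto
  qed
  have "odd (int ?m - int 0)" using odd_prod_primes[OF fin pr] by (simp del: of_nat_prod)
  then have "reach (nn P) (SS P) ?D (int ?m - int 0)" using odd_reach[OF fin c1 pr] by blast
  then have wD: "circ_walk (nn P) (SS P) ?D ?m 0" using reach_imp_walk mn npos Sn by blast
  have no: "\<forall>k<?D. \<not> circ_walk (nn P) (SS P) k ?m 0"
  proof (intro allI impI notI)
    fix k assume "k < ?D" "circ_walk (nn P) (SS P) k ?m 0"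
    then have "reach (nn P) (SS P) k (int ?m - int 0)" using walk_imp_reach npos by blast
    then have "reach (nn P) (SS P) k (int ?m)" by simp
    then have "?D \<le> k" using lower[OF fin pr] by blast
    then show False using \<open>k < ?D\<close> by simp
  qed
  show ?thesis by (rule diam_eq[OF walk mn npos wD no])
qed

theorem theorem5:
  shows "(\<forall>P :: nat set. finite P \<and> card P \<ge> 3 \<and> (\<forall>p\<in>P. prime p \<and> odd p) \<longrightarrow>
            (let n = \<Prod>P in circ_diameter n (\<Union>d\<in>P. Gn n d) = 2))
       \<and> (\<forall>P :: nat set. finite P \<and> card P \<ge> 1 \<and> (\<forall>p\<in>P. prime p \<and> odd p) \<longrightarrow>
            (let m = \<Prod>P; n = 2 * m^2; D = (\<lambda>p. (m div p)^2) ` P in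
             circ_diameter n (\<Union>d\<in>D. Gn n d) = enat (2 * card P + 1)))"
proof (intro conjI allI impI)
  fix P :: "nat set"
  assume "finite P \<and> card P \<ge> 3 \<and> (\<forall>p\<in>P. prime p \<and> odd p)"
  then show "let n = \<Prod>P in circ_diameter n (\<Union>d\<in>P. Gn n d) = 2" using part1 by (simp add: Let_def)
next
  fix P :: "nat set"
  assume "finite P \<and> card P \<ge> 1 \<and> (\<forall>p\<in>P. prime p \<and> odd p)"
  then have "circ_diameter (nn P) (SS P) = enat (2 * card P + 1)" using part2 by blast
  then show "let m = \<Prod>P; n = 2 * m^2; D = (\<lambda>p. (m div p)^2) ` P in
             circ_diameter n (\<Union>d\<in>D. Gn n d) = enat (2 * card P + 1)"
    unfolding nn_def SS_def Let_def .
qed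

end
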